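(* Let $X\in\mathbb{R}^{n\times D}$, $y\in\mathbb{R}^n$, $\lambda_2>0$. Let $\mathcal{Q}$ be a partition of $\{1,\dots,D\}$ and $\mathcal{P}$ a partition of $\{1,\dots,n\}$ such that $(\mathcal{P},\mathcal{Q})$ is equitable on $X$ and $(X^\top y)_{j_1}=(X^\top y)_{j_2}$ whenever $j_1,j_2$ share a color of $\mathcal{Q}$. Set $X'=\Pi_{\mathcal{P}}^{\mathrm{Scaled}}X\Pi_{\mathcal{Q}}$, $y'=\Pi_{\mathcal{P}}^{\mathrm{Scaled}}y$, $W'=\Pi_{\mathcal{P}}^\top\Pi_{\mathcal{P}}$, and let $Q'$ be the $|\mathcal{Q}|\times|\mathcal{Q}|$ diagonal matrix with $Q'_{TT}=\lambda_2|T|$. If $w'\in\mathbb{R}^{|\mathcal{Q}|}$ satisfies $\big((X')^\top W'X'+Q'\big)w'=(X')^\top W'y'$ (the optimality condition of the reduced ridge problem), then $\Pi_{\mathcal{Q}}w'=(X^\top X+\lambda_2I)^{-1}X^\top y$.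
   Context: A partition of a finite set is a set of nonempty pairwise disjoint subsets ("colors") covering it. A pair $(\mathcal{P},\mathcal{Q})$ of partitions of the row and column indices of $A$ is equitable on $A$ if for every $S\in\mathcal{P}$, $T\in\mathcal{Q}$: $\sum_{j\in T}A_{ij}$ is the same for all $i\in S$ and $\sum_{i\in S}A_{ij}$ is the same for all $j\in T$. For a partition $\mathcal{Q}$ of $\{1,\dots,D\}$, $\Pi_{\mathcal{Q}}\in\{0,1\}^{D\times|\mathcal{Q}|}$ has $(\Pi_{\mathcal{Q}})_{jT}=1$ iff $j\in T$; $\Pi^{\mathrm{Scaled}}_{\mathcal{Q}}\in\mathbb{R}^{|\mathcal{Q}|\times D}$ has entries $1/|T|$ if $j\in T$ and $0$ otherwise; similarly for $\mathcal{P}$. *)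

theory Defs
  imports "Jordan_Normal_Form.Gauss_Jordan_Elimination"
begin

text \<open>A partition of a finite set S, with its colors listed in some (arbitrary) fixed order,
  so that the columns of the indicator matrices can be indexed by 0..<length Cs.\<close>
definition is_partition_list :: "nat set \<Rightarrow> nat set list \<Rightarrow> bool" where
  "is_partition_list S Cs \<longleftrightarrow> distinct Cs \<and> (\<forall>C\<in>set Cs. C \<noteq> {}) \<and>
     (\<forall>C1\<in>set Cs. \<forall>C2\<in>set Cs. C1 \<noteq> C2 \<longrightarrow> C1 \<inter> C2 = {}) \<and> \<Union>(set Cs) = S"

definition equitable :: "nat set list \<Rightarrow> nat set list \<Rightarrow> real mat \<Rightarrow> bool" where
  "equitable Ps Qs A \<longleftrightarrow>
     (\<forall>S\<in>set Ps. \<forall>T\<in>set Qs.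
        (\<forall>i1\<in>S. \<forall>i2\<in>S. (\<Sum>j\<in>T. A $$ (i1, j)) = (\<Sum>j\<in>T. A $$ (i2, j))) \<and>
        (\<forall>j1\<in>T. \<forall>j2\<in>T. (\<Sum>i\<in>S. A $$ (i, j1)) = (\<Sum>i\<in>S. A $$ (i, j2))))"

definition Pi_mat :: "nat \<Rightarrow> nat set list \<Rightarrow> real mat" where
  "Pi_mat D Qs = mat D (length Qs) (\<lambda>(j, t). if j \<in> Qs ! t then 1 else 0)"

definition Pi_scaled :: "nat \<Rightarrow> nat set list \<Rightarrow> real mat" where
  "Pi_scaled D Qs = mat (length Qs) D (\<lambda>(t, j). if j \<in> Qs ! t then 1 / real (card (Qs ! t)) else 0)"

end

theory Submission
  imports Defs "Jordan_Normal_Form.Determinant"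
begin


definition cidx :: "nat set list \<Rightarrow> nat \<Rightarrow> nat" where
  "cidx Cs j = (THE t. t < length Cs \<and> j \<in> Cs ! t)"

lemma part_uniq:
  assumes "is_partition_list S Cs" "t < length Cs" "t' < length Cs" "j \<in> Cs!t" "j \<in> Cs!t'"
  shows "t = t'"
proof (rule ccontr)
  assume "t \<noteq> t'"
  hence "Cs!t \<noteq> Cs!t'" using assms(1,2,3) unfolding is_partition_list_def by (simp add: nth_eq_iff_index_eq)
  hence "Cs!t \<inter> Cs!t' = {}" using assms(1,2,3) unfolding is_partition_list_def by (meson nth_mem)
  thus False using assms(4,5) by blast
qed

lemma cidx_eq:
  assumes "is_partition_list S Cs" "t < length Cs" "j \<in> Cs!t"
  shows "cidx Cs j = t"
  unfolding cidx_def using part_uniq[OF assms(1)] assms(2,3) by blast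

lemma cidx:
  assumes "is_partition_list S Cs" "j \<in> S"
  shows "cidx Cs j < length Cs \<and> j \<in> Cs ! (cidx Cs j)"
proof -
  from assms obtain C where "C \<in> set Cs" "j \<in> C" unfolding is_partition_list_def by blast
  then obtain t where "t < length Cs" "Cs!t = C" by (meson in_set_conv_nth)
  thus ?thesis using cidx_eq[OF assms(1)] \<open>j \<in> C\<close> by auto
qed

lemma part_sub:
  assumes "is_partition_list S Cs" "t < length Cs"
  shows "Cs!t \<subseteq> S"
  using assms unfolding is_partition_list_def by (metis Union_upper nth_mem)

lemma part_card:
  assumes "is_partition_list S Cs" "t < length Cs" "finite S"
  shows "card (Cs!t) > 0"
  using assms part_sub[OF assms(1,2)] unfolding is_partition_list_def
  by (metis card_gt_0_iff finite_subset nth_mem)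

lemma part_fin:
  assumes "is_partition_list {0..<m} Cs" "t < length Cs"
  shows "finite (Cs!t)"
  using part_sub[OF assms] finite_subset by blast

lemma part_set:
  assumes "is_partition_list {0..<m} Cs" "t < length Cs"
  shows "{j \<in> {0..<m}. cidx Cs j = t} = Cs!t"
  using part_sub[OF assms] cidx_eq[OF assms(1) assms(2)] cidx[OF assms(1)] by auto

lemma part_sum:
  assumes "is_partition_list {0..<m} Cs"
  shows "(\<Sum>j\<in>{0..<m}. f j) = (\<Sum>t\<in>{0..<length Cs}. \<Sum>j\<in>Cs!t. f j)"
proof -
  have "(\<Sum>j\<in>{0..<m}. f j) = (\<Sum>t\<in>{0..<length Cs}. \<Sum>j\<in>{j \<in> {0..<m}. cidx Cs j = t}. f j)"
    by (rule sum.group[symmetric]) (use cidx[OF assms] in auto)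
  also have "\<dots> = (\<Sum>t\<in>{0..<length Cs}. \<Sum>j\<in>Cs!t. f j)"
    using part_set[OF assms] by (intro sum.cong) auto
  finally show ?thesis .
qed

lemma sum_ind:
  fixes f :: "nat \<Rightarrow> real"
  assumes "S \<subseteq> {0..<n}"
  shows "(\<Sum>i\<in>{0..<n}. (if i \<in> S then a else 0) * f i) = a * sum f S"
proof -
  have "(\<Sum>i\<in>{0..<n}. (if i \<in> S then a else 0) * f i) = (\<Sum>i\<in>{0..<n}. if i \<in> S then a * f i else 0)"
    by (intro sum.cong) auto
  also have "\<dots> = sum (\<lambda>i. a * f i) S"
    using assms by (simp add: sum.If_cases Int_absorb1)
  finally show ?thesis by (simp add: sum_distrib_left)
qed

lemma sum_const_on:
  fixes f :: "nat \<Rightarrow> real"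
  assumes "\<forall>x\<in>S. \<forall>y\<in>S. f x = f y" "j \<in> S"
  shows "sum f S = real (card S) * f j"
proof -
  have "sum f S = sum (\<lambda>_. f j) S" by (intro sum.cong refl) (use assms in blast)
  thus ?thesis by simp
qed

lemma sum_ind2:
  fixes f :: "nat \<Rightarrow> real"
  assumes "S \<subseteq> {0..<n}"
  shows "(\<Sum>i\<in>{0..<n}. f i * (if i \<in> S then a else 0)) = a * sum f S"
  using sum_ind[OF assms, of a f] by (simp add: mult.commute)

lemma sum_delta_mul:
  fixes g :: "nat \<Rightarrow> real"
  assumes "s \<in> A" "finite A"
  shows "(\<Sum>x\<in>A. (if s = x then c x else 0) * g x) = c s * g s"
proof -
  have "(\<Sum>x\<in>A. (if s = x then c x else 0) * g x) = (\<Sum>x\<in>A. if s = x then c x * g x else 0)"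
    by (intro sum.cong) auto
  also have "\<dots> = c s * g s" using assms by simp
  finally show ?thesis .
qed

lemma mv: "A \<in> carrier_mat r c \<Longrightarrow> v \<in> carrier_vec c \<Longrightarrow> i < r \<Longrightarrow>
   (A *\<^sub>v v) $ i = (\<Sum>k\<in>{0..<c}. A $$ (i,k) * v $ k)"
  by (auto simp: scalar_prod_def)

lemma mm: "A \<in> carrier_mat r c \<Longrightarrow> B \<in> carrier_mat c d \<Longrightarrow> i < r \<Longrightarrow> j < d \<Longrightarrow>
   (A * B) $$ (i,j) = (\<Sum>k\<in>{0..<c}. A $$ (i,k) * B $$ (k,j))"
  by (auto simp: scalar_prod_def)



theorem mainTheorem8:
  fixes n D :: nat and X :: "real mat" and y :: "real vec" and lambda2 :: real
    and Ps Qs :: "nat set list" and w' :: "real vec"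
  assumes X: "X \<in> carrier_mat n D"
    and y: "y \<in> carrier_vec n"
    and lam: "lambda2 > 0"
    and Q: "is_partition_list {0..<D} Qs"
    and P: "is_partition_list {0..<n} Ps"
    and eq: "equitable Ps Qs X"
    and Xy: "\<forall>T\<in>set Qs. \<forall>j1\<in>T. \<forall>j2\<in>T. (transpose_mat X *\<^sub>v y) $ j1 = (transpose_mat X *\<^sub>v y) $ j2"
    and w': "w' \<in> carrier_vec (length Qs)"
    and opt: "let X' = Pi_scaled n Ps * X * Pi_mat D Qs;
                  y' = Pi_scaled n Ps *\<^sub>v y;
                  W' = transpose_mat (Pi_mat n Ps) * Pi_mat n Ps;
                  Q' = mat (length Qs) (length Qs)
                         (\<lambda>(s, t). if s = t then lambda2 * real (card (Qs ! t)) else 0)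
              in (transpose_mat X' * W' * X' + Q') *\<^sub>v w' = transpose_mat X' * W' *\<^sub>v y'"
  shows "\<exists>M. mat_inverse (transpose_mat X * X + lambda2 \<cdot>\<^sub>m 1\<^sub>m D) = Some M \<and>
             Pi_mat D Qs *\<^sub>v w' = M *\<^sub>v (transpose_mat X *\<^sub>v y)"
proof -
  define p where "p = length Ps"
  define q where "q = length Qs"
  define Pm where "Pm = Pi_mat n Ps"
  define Psc where "Psc = Pi_scaled n Ps"
  define Qm where "Qm = Pi_mat D Qs"
  define X' where "X' = Psc * X * Qm"
  define y' where "y' = Psc *\<^sub>v y"
  define W' where "W' = transpose_mat Pm * Pm"
  define Q' where "Q' = mat q q (\<lambda>(s, t). if s = t then lambda2 * real (card (Qs ! t)) else 0)"
  define A where "A = transpose_mat X * X + lambda2 \<cdot>\<^sub>m 1\<^sub>m D"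
  define w where "w = Qm *\<^sub>v w'"
  define Xt where "Xt = transpose_mat X"
  define cp where "cp = cidx Ps"
  define cq where "cq = cidx Qs"
  have opt': "(transpose_mat X' * W' * X' + Q') *\<^sub>v w' = transpose_mat X' * W' *\<^sub>v y'"
    using opt by (simp only: Let_def X'_def y'_def W'_def Q'_def Pm_def Psc_def Qm_def q_def)
  have w'c: "w' \<in> carrier_vec q" using w' q_def by simp
  have Pmc: "Pm \<in> carrier_mat n p" unfolding Pm_def Pi_mat_def p_def by simp
  have Pscc: "Psc \<in> carrier_mat p n" unfolding Psc_def Pi_scaled_def p_def by simp
  have Qmc: "Qm \<in> carrier_mat D q" unfolding Qm_def Pi_mat_def q_def by simp
  have PXc: "Psc * X \<in> carrier_mat p D" using Pscc X by simp
  have X'c: "X' \<in> carrier_mat p q" unfolding X'_def using PXc Qmc by simp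
  have W'c: "W' \<in> carrier_mat p p" unfolding W'_def using Pmc by simp
  have Q'c: "Q' \<in> carrier_mat q q" unfolding Q'_def by simp
  have y'c: "y' \<in> carrier_vec p" unfolding y'_def using Pscc y by simp
  have Ac: "A \<in> carrier_mat D D" unfolding A_def using X by simp
  have wc: "w \<in> carrier_vec D" unfolding w_def using Qmc w'c by simp
  have Xtc: "Xt \<in> carrier_mat D n" unfolding Xt_def using X by simp
  have Xt_e: "Xt $$ (j, i) = X $$ (i, j)" if "j < D" "i < n" for i j
    unfolding Xt_def using X that by simp
  have Qm_e: "Qm $$ (j, t) = (if j \<in> Qs ! t then 1 else 0)" if "j < D" "t < q" for j t
    unfolding Qm_def Pi_mat_def using that q_def by simp
  have Pm_e: "Pm $$ (i, s) = (if i \<in> Ps ! s then 1 else 0)" if "i < n" "s < p" for i s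
    unfolding Pm_def Pi_mat_def using that p_def by simp
  have Psc_e: "Psc $$ (s, i) = (if i \<in> Ps ! s then 1 / real (card (Ps ! s)) else 0)" if "i < n" "s < p" for i s
    unfolding Psc_def Pi_scaled_def using that p_def by simp
  have Ssub: "Ps ! s \<subseteq> {0..<n}" if "s < p" for s using part_sub[OF P] that p_def by simp
  have Tsub: "Qs ! t \<subseteq> {0..<D}" if "t < q" for t using part_sub[OF Q] that q_def by simp
  have Sfin: "finite (Ps ! s)" if "s < p" for s using part_fin[OF P] that p_def by simp
  have Tfin: "finite (Qs ! t)" if "t < q" for t using part_fin[OF Q] that q_def by simp
  have Scard: "card (Ps ! s) > 0" if "s < p" for s using part_card[OF P] that p_def by simp
  have Tcard: "card (Qs ! t) > 0" if "t < q" for t using part_card[OF Q] that q_def by simp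
  have cp: "cp i < p \<and> i \<in> Ps ! cp i" if "i < n" for i using cidx[OF P] that cp_def p_def by simp
  have cq: "cq j < q \<and> j \<in> Qs ! cq j" if "j < D" for j using cidx[OF Q] that cq_def q_def by simp
  have cp_eq: "cp i = s" if "s < p" "i \<in> Ps ! s" for i s using cidx_eq[OF P] that cp_def p_def by simp
  have cq_eq: "cq j = t" if "t < q" "j \<in> Qs ! t" for j t using cidx_eq[OF Q] that cq_def q_def by simp
  have psum: "(\<Sum>i\<in>{0..<n}. f i) = (\<Sum>s\<in>{0..<p}. \<Sum>i\<in>Ps!s. f i)" for f :: "nat \<Rightarrow> real"
    using part_sum[OF P] p_def by simp
  have qsum: "(\<Sum>j\<in>{0..<D}. f j) = (\<Sum>t\<in>{0..<q}. \<Sum>j\<in>Qs!t. f j)" for f :: "nat \<Rightarrow> real"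
    using part_sum[OF Q] q_def by simp

  define R where "R s t = (1 / real (card (Ps!s))) * (\<Sum>i\<in>Ps!s. \<Sum>j\<in>Qs!t. X $$ (i, j))" for s t
  define K where "K s t = (1 / real (card (Qs!t))) * (\<Sum>j\<in>Qs!t. \<Sum>i\<in>Ps!s. X $$ (i, j))" for s t
  have row: "(\<Sum>j\<in>Qs!t. X $$ (i, j)) = R s t" if "s < p" "t < q" "i \<in> Ps!s" for s t i
  proof -
    have "\<forall>i1\<in>Ps!s. \<forall>i2\<in>Ps!s. (\<Sum>j\<in>Qs!t. X $$ (i1, j)) = (\<Sum>j\<in>Qs!t. X $$ (i2, j))"
      using eq that unfolding equitable_def p_def q_def by (meson nth_mem)
    from sum_const_on[OF this that(3)]
    have "(\<Sum>i\<in>Ps!s. \<Sum>j\<in>Qs!t. X $$ (i, j)) = real (card (Ps!s)) * (\<Sum>j\<in>Qs!t. X $$ (i, j))" .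
    thus ?thesis unfolding R_def using Scard[OF that(1)] by simp
  qed
  have col: "(\<Sum>i\<in>Ps!s. X $$ (i, j)) = K s t" if "s < p" "t < q" "j \<in> Qs!t" for s t j
  proof -
    have "\<forall>j1\<in>Qs!t. \<forall>j2\<in>Qs!t. (\<Sum>i\<in>Ps!s. X $$ (i, j1)) = (\<Sum>i\<in>Ps!s. X $$ (i, j2))"
      using eq that unfolding equitable_def p_def q_def by (meson nth_mem)
    from sum_const_on[OF this that(3)]
    have "(\<Sum>j\<in>Qs!t. \<Sum>i\<in>Ps!s. X $$ (i, j)) = real (card (Qs!t)) * (\<Sum>i\<in>Ps!s. X $$ (i, j))" .
    thus ?thesis unfolding K_def using Tcard[OF that(2)] by simp
  qed
  have RK: "real (card (Ps!s)) * R s t = real (card (Qs!t)) * K s t" if "s < p" "t < q" for s t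
    unfolding R_def K_def using Scard[OF that(1)] Tcard[OF that(2)] by (simp add: sum.swap[of _ "Ps!s"])

  have X'_e: "X' $$ (s, t) = R s t" if "s < p" "t < q" for s t
  proof -
    have PX: "(Psc * X) $$ (s, j) = (1 / real (card (Ps!s))) * (\<Sum>i\<in>Ps!s. X $$ (i, j))" if "j < D" for j
    proof -
      have "(Psc * X) $$ (s, j) = (\<Sum>i\<in>{0..<n}. Psc $$ (s, i) * X $$ (i, j))"
        using mm[OF Pscc X] \<open>s < p\<close> that by simp
      also have "\<dots> = (\<Sum>i\<in>{0..<n}. (if i \<in> Ps ! s then 1 / real (card (Ps ! s)) else 0) * X $$ (i, j))"
        using Psc_e \<open>s < p\<close> by (intro sum.cong) auto
      also have "\<dots> = (1 / real (card (Ps!s))) * (\<Sum>i\<in>Ps!s. X $$ (i, j))"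
        by (rule sum_ind[OF Ssub[OF \<open>s < p\<close>]])
      finally show ?thesis .
    qed
    have "X' $$ (s, t) = (\<Sum>j\<in>{0..<D}. (Psc * X) $$ (s, j) * Qm $$ (j, t))"
      unfolding X'_def using mm[OF PXc Qmc] that by simp
    also have "\<dots> = (\<Sum>j\<in>{0..<D}. ((1 / real (card (Ps!s))) * (\<Sum>i\<in>Ps!s. X $$ (i, j))) * (if j \<in> Qs ! t then 1 else 0))"
      using PX Qm_e \<open>t < q\<close> by (intro sum.cong) auto
    also have "\<dots> = (\<Sum>j\<in>Qs!t. (1 / real (card (Ps!s))) * (\<Sum>i\<in>Ps!s. X $$ (i, j)))"
      using sum_ind2[OF Tsub[OF \<open>t < q\<close>], of "\<lambda>j. (1 / real (card (Ps!s))) * (\<Sum>i\<in>Ps!s. X $$ (i, j))" 1] by simp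
    also have "\<dots> = R s t" unfolding R_def by (simp add: sum_divide_distrib[symmetric] sum.swap[of _ "Ps!s"])
    finally show ?thesis .
  qed
  have W'_e: "W' $$ (s, s') = (if s = s' then real (card (Ps!s')) else 0)" if "s < p" "s' < p" for s s'
  proof -
    have "W' $$ (s, s') = (\<Sum>i\<in>{0..<n}. transpose_mat Pm $$ (s, i) * Pm $$ (i, s'))"
      unfolding W'_def using mm[of "transpose_mat Pm" p n Pm p] Pmc that by simp
    also have "\<dots> = (\<Sum>i\<in>{0..<n}. (if i \<in> Ps ! s then 1 else 0) * (if i \<in> Ps ! s' then 1 else 0))"
      using Pm_e Pmc that by (intro sum.cong) auto
    also have "\<dots> = (\<Sum>i\<in>Ps!s. (if i \<in> Ps ! s' then 1 else 0))"
      using sum_ind[OF Ssub[OF \<open>s < p\<close>], of 1] by simp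
    also have "\<dots> = (if s = s' then real (card (Ps!s')) else 0)"
    proof (cases "s = s'")
      case True thus ?thesis by simp
    next
      case False
      have "(\<Sum>i\<in>Ps!s. (if i \<in> Ps ! s' then 1 else 0)) = (\<Sum>i\<in>Ps!s. (0::real))"
        using False part_uniq[OF P] that p_def by (intro sum.cong) auto
      thus ?thesis using False by simp
    qed
    finally show ?thesis .
  qed
  have Wv: "(W' *\<^sub>v v) $ s = real (card (Ps!s)) * v $ s" if "v \<in> carrier_vec p" "s < p" for v s
  proof -
    have "(W' *\<^sub>v v) $ s = (\<Sum>s'\<in>{0..<p}. W' $$ (s, s') * v $ s')" using mv[OF W'c that] by simp
    also have "\<dots> = (\<Sum>s'\<in>{0..<p}. (if s = s' then real (card (Ps!s')) else 0) * v $ s')"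
      using W'_e that by (intro sum.cong) auto
    also have "\<dots> = real (card (Ps!s)) * v $ s" using that by (intro sum_delta_mul) auto
    finally show ?thesis .
  qed
  define a where "a = X' *\<^sub>v w'"
  have ac: "a \<in> carrier_vec p" unfolding a_def using X'c w'c by simp
  have a_e: "a $ s = (\<Sum>t\<in>{0..<q}. R s t * w' $ t)" if "s < p" for s
    unfolding a_def mv[OF X'c w'c that] by (rule sum.cong) (auto simp: X'_e that)
  have X'tv: "(transpose_mat X' *\<^sub>v v) $ t = (\<Sum>s\<in>{0..<p}. R s t * v $ s)" if "v \<in> carrier_vec p" "t < q" for v t
  proof -
    have tc: "transpose_mat X' \<in> carrier_mat q p" using X'c by simp
    show ?thesis unfolding mv[OF tc that] by (rule sum.cong) (use X'c X'_e that in auto)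
  qed
  have L: "(transpose_mat X' * W' * X' + Q') *\<^sub>v w' = transpose_mat X' *\<^sub>v (W' *\<^sub>v a) + Q' *\<^sub>v w'"
  proof -
    have "transpose_mat X' * W' * X' \<in> carrier_mat q q" using X'c W'c by simp
    hence "(transpose_mat X' * W' * X' + Q') *\<^sub>v w' = (transpose_mat X' * W' * X') *\<^sub>v w' + Q' *\<^sub>v w'"
      using add_mult_distrib_mat_vec Q'c w'c by blast
    also have "(transpose_mat X' * W' * X') *\<^sub>v w' = transpose_mat X' *\<^sub>v (W' *\<^sub>v a)"
      unfolding a_def using X'c W'c w'c by (simp add: assoc_mult_mat_vec[of _ q p _ q])
    finally show ?thesis .
  qed
  have Rhs: "transpose_mat X' * W' *\<^sub>v y' = transpose_mat X' *\<^sub>v (W' *\<^sub>v y')"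
    using X'c W'c y'c by (simp add: assoc_mult_mat_vec[of _ q p _ p])
  have Q'w: "(Q' *\<^sub>v w') $ t = lambda2 * real (card (Qs ! t)) * w' $ t" if "t < q" for t
  proof -
    have "(Q' *\<^sub>v w') $ t = (\<Sum>t'\<in>{0..<q}. Q' $$ (t, t') * w' $ t')" using mv[OF Q'c w'c that] by simp
    also have "\<dots> = (\<Sum>t'\<in>{0..<q}. (if t = t' then lambda2 * real (card (Qs ! t')) else 0) * w' $ t')"
      unfolding Q'_def using that by (intro sum.cong) auto
    also have "\<dots> = lambda2 * real (card (Qs ! t)) * w' $ t" using that by (intro sum_delta_mul) auto
    finally show ?thesis .
  qed

  have w_e: "w $ j = w' $ cq j" if "j < D" for j
  proof -
    have "w $ j = (\<Sum>t\<in>{0..<q}. Qm $$ (j, t) * w' $ t)" unfolding w_def using mv[OF Qmc w'c that] by simp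
    also have "\<dots> = (\<Sum>t\<in>{0..<q}. (if cq j = t then 1 else 0) * w' $ t)"
      using Qm_e that cq_eq cq by (intro sum.cong) auto
    also have "\<dots> = w' $ cq j" using cq[OF that] by (subst sum_delta_mul) auto
    finally show ?thesis .
  qed
  have Xw_e: "(X *\<^sub>v w) $ i = a $ cp i" if "i < n" for i
  proof -
    have "(X *\<^sub>v w) $ i = (\<Sum>j\<in>{0..<D}. X $$ (i, j) * w $ j)" using mv[OF X wc that] by simp
    also have "\<dots> = (\<Sum>t\<in>{0..<q}. \<Sum>j\<in>Qs!t. X $$ (i, j) * w $ j)" by (rule qsum)
    also have "\<dots> = (\<Sum>t\<in>{0..<q}. \<Sum>j\<in>Qs!t. X $$ (i, j) * w' $ t)"
      using w_e cq_eq Tsub by (intro sum.cong refl) (auto simp: subset_iff)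
    also have "\<dots> = (\<Sum>t\<in>{0..<q}. R (cp i) t * w' $ t)"
      using row cp[OF that] by (intro sum.cong refl) (simp add: sum_distrib_right[symmetric])
    also have "\<dots> = a $ cp i" using a_e cp[OF that] by simp
    finally show ?thesis .
  qed
  have XtXw_e: "(Xt *\<^sub>v (X *\<^sub>v w)) $ j = (\<Sum>s\<in>{0..<p}. K s (cq j) * a $ s)" if "j < D" for j
  proof -
    have Xwc: "X *\<^sub>v w \<in> carrier_vec n" using X wc by simp
    have "(Xt *\<^sub>v (X *\<^sub>v w)) $ j = (\<Sum>i\<in>{0..<n}. Xt $$ (j, i) * (X *\<^sub>v w) $ i)" using mv[OF Xtc Xwc that] by simp
    also have "\<dots> = (\<Sum>i\<in>{0..<n}. X $$ (i, j) * a $ cp i)" using Xt_e Xw_e that by (intro sum.cong) auto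
    also have "\<dots> = (\<Sum>s\<in>{0..<p}. \<Sum>i\<in>Ps!s. X $$ (i, j) * a $ cp i)" by (rule psum)
    also have "\<dots> = (\<Sum>s\<in>{0..<p}. \<Sum>i\<in>Ps!s. X $$ (i, j) * a $ s)"
      using cp_eq by (intro sum.cong refl) auto
    also have "\<dots> = (\<Sum>s\<in>{0..<p}. K s (cq j) * a $ s)"
      using col cq[OF that] by (intro sum.cong refl) (simp add: sum_distrib_right[symmetric])
    finally show ?thesis .
  qed
  have Av: "(A *\<^sub>v v) $ j = (Xt *\<^sub>v (X *\<^sub>v v)) $ j + lambda2 * v $ j" if "v \<in> carrier_vec D" "j < D" for v j
  proof -
    have "A *\<^sub>v v = (Xt * X) *\<^sub>v v + (lambda2 \<cdot>\<^sub>m 1\<^sub>m D) *\<^sub>v v"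
      unfolding A_def Xt_def using X that by (intro add_mult_distrib_mat_vec) auto
    also have "(Xt * X) *\<^sub>v v = Xt *\<^sub>v (X *\<^sub>v v)" using Xtc X that by simp
    finally have "(A *\<^sub>v v) $ j = (Xt *\<^sub>v (X *\<^sub>v v)) $ j + ((lambda2 \<cdot>\<^sub>m 1\<^sub>m D) *\<^sub>v v) $ j"
      using that X Xtc by simp
    also have "((lambda2 \<cdot>\<^sub>m 1\<^sub>m D) *\<^sub>v v) $ j = (\<Sum>k\<in>{0..<D}. (if j = k then lambda2 else 0) * v $ k)"
    proof -
      have sc: "lambda2 \<cdot>\<^sub>m 1\<^sub>m D \<in> carrier_mat D D" by simp
      show ?thesis unfolding mv[OF sc that] by (rule sum.cong) (use that in auto)
    qed
    also have "\<dots> = lambda2 * v $ j" using that by (subst sum_delta_mul) auto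
    finally show ?thesis .
  qed

  have main: "real (card (Qs!t)) * (A *\<^sub>v w) $ j = real (card (Qs!t)) * (Xt *\<^sub>v y) $ j"
    if "t < q" "j \<in> Qs!t" for t j
  proof -
    have jD: "j < D" using Tsub[OF that(1)] that(2) by auto
    have cqj: "cq j = t" using cq_eq that by simp
    have "real (card (Qs!t)) * (A *\<^sub>v w) $ j
        = real (card (Qs!t)) * ((\<Sum>s\<in>{0..<p}. K s t * a $ s) + lambda2 * w' $ t)"
      using Av[OF wc jD] XtXw_e[OF jD] w_e[OF jD] cqj by simp
    also have "\<dots> = (\<Sum>s\<in>{0..<p}. (real (card (Qs!t)) * K s t) * a $ s) + lambda2 * real (card (Qs!t)) * w' $ t"
      by (simp add: algebra_simps sum_distrib_left)
    also have "\<dots> = (\<Sum>s\<in>{0..<p}. R s t * (real (card (Ps!s)) * a $ s)) + lambda2 * real (card (Qs!t)) * w' $ t"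
      using RK that by (intro arg_cong2[where f="(+)"] sum.cong refl) (auto simp: algebra_simps)
    also have "\<dots> = (\<Sum>s\<in>{0..<p}. R s t * (W' *\<^sub>v a) $ s) + (Q' *\<^sub>v w') $ t"
      using Wv[OF ac] Q'w[OF that(1)] by simp
    also have "\<dots> = ((transpose_mat X' * W' * X' + Q') *\<^sub>v w') $ t"
      unfolding L using X'tv[of "W' *\<^sub>v a" t] W'c ac that X'c Q'c w'c by simp
    also have "\<dots> = (transpose_mat X' *\<^sub>v (W' *\<^sub>v y')) $ t" using opt' Rhs by simp
    also have "\<dots> = (\<Sum>s\<in>{0..<p}. R s t * (real (card (Ps!s)) * y' $ s))"
      using X'tv[of "W' *\<^sub>v y'" t] W'c y'c that Wv[OF y'c] by simp
    also have "\<dots> = (\<Sum>s\<in>{0..<p}. \<Sum>i\<in>Ps!s. R s t * y $ i)"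
    proof (intro sum.cong refl)
      fix s assume s: "s \<in> {0..<p}"
      have "y' $ s = (\<Sum>i\<in>{0..<n}. Psc $$ (s, i) * y $ i)" unfolding y'_def using mv[OF Pscc y] s by simp
      also have "\<dots> = (\<Sum>i\<in>{0..<n}. (if i \<in> Ps ! s then 1 / real (card (Ps ! s)) else 0) * y $ i)"
        using Psc_e s by (intro sum.cong) auto
      also have "\<dots> = 1 / real (card (Ps ! s)) * sum (($) y) (Ps!s)"
        using sum_ind[OF Ssub, of s] s by simp
      finally show "R s t * (real (card (Ps!s)) * y' $ s) = (\<Sum>i\<in>Ps!s. R s t * y $ i)"
        using Scard[of s] s by (simp add: sum_distrib_left)
    qed
    also have "\<dots> = (\<Sum>s\<in>{0..<p}. \<Sum>i\<in>Ps!s. (\<Sum>j'\<in>Qs!t. X $$ (i, j')) * y $ i)"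
      using row that by (intro sum.cong refl) auto
    also have "\<dots> = (\<Sum>i\<in>{0..<n}. (\<Sum>j'\<in>Qs!t. X $$ (i, j')) * y $ i)" by (rule psum[symmetric])
    also have "\<dots> = (\<Sum>j'\<in>Qs!t. \<Sum>i\<in>{0..<n}. X $$ (i, j') * y $ i)"
      by (simp add: sum_distrib_right sum.swap[of _ "Qs!t"])
    also have "\<dots> = (\<Sum>j'\<in>Qs!t. (Xt *\<^sub>v y) $ j')"
    proof (intro sum.cong refl)
      fix j' assume "j' \<in> Qs!t"
      hence "j' < D" using Tsub[OF that(1)] by auto
      thus "(\<Sum>i\<in>{0..<n}. X $$ (i, j') * y $ i) = (Xt *\<^sub>v y) $ j'"
        using mv[OF Xtc y] Xt_e by (simp add: mult.commute)
    qed
    also have "\<dots> = real (card (Qs!t)) * (Xt *\<^sub>v y) $ j"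
    proof -
      have Tin: "Qs!t \<in> set Qs" using that(1) q_def by simp
      have "\<forall>a\<in>Qs!t. \<forall>b\<in>Qs!t. (Xt *\<^sub>v y) $ a = (Xt *\<^sub>v y) $ b"
        using Xy Tin unfolding Xt_def by blast
      from sum_const_on[OF this that(2)] show ?thesis .
    qed
    finally show ?thesis .
  qed
  have Aw: "A *\<^sub>v w = Xt *\<^sub>v y"
  proof (rule eq_vecI)
    show "dim_vec (A *\<^sub>v w) = dim_vec (Xt *\<^sub>v y)" using Ac Xtc by simp
    fix j assume "j < dim_vec (Xt *\<^sub>v y)"
    hence jD: "j < D" using Xtc by simp
    have "card (Qs ! cq j) > 0" using Tcard cq[OF jD] by simp
    thus "(A *\<^sub>v w) $ j = (Xt *\<^sub>v y) $ j" using main[of "cq j" j] cq[OF jD] by simp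
  qed

  have inj: "v = 0\<^sub>v D" if v: "v \<in> carrier_vec D" and Av0: "A *\<^sub>v v = 0\<^sub>v D" for v
  proof -
    define u where "u = X *\<^sub>v v"
    have uc: "u \<in> carrier_vec n" unfolding u_def using X v by simp
    have comp: "(Xt *\<^sub>v u) $ j + lambda2 * v $ j = 0" if "j < D" for j
      using Av[OF v that] Av0 that unfolding u_def by simp
    have "(\<Sum>j\<in>{0..<D}. v $ j * (Xt *\<^sub>v u) $ j) = (\<Sum>j\<in>{0..<D}. \<Sum>i\<in>{0..<n}. v $ j * X $$ (i, j) * u $ i)"
      using mv[OF Xtc uc] Xt_e by (intro sum.cong refl) (simp add: sum_distrib_left mult.assoc)
    also have "\<dots> = (\<Sum>i\<in>{0..<n}. u $ i * (\<Sum>j\<in>{0..<D}. X $$ (i, j) * v $ j))"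
      by (subst sum.swap) (simp add: sum_distrib_left algebra_simps)
    also have "\<dots> = (\<Sum>i\<in>{0..<n}. u $ i * u $ i)"
      unfolding u_def using mv[OF X v] by (intro sum.cong refl) (simp add: u_def[symmetric])
    finally have e1: "(\<Sum>j\<in>{0..<D}. v $ j * (Xt *\<^sub>v u) $ j) = (\<Sum>i\<in>{0..<n}. u $ i * u $ i)" .
    have "(\<Sum>j\<in>{0..<D}. v $ j * (Xt *\<^sub>v u) $ j) + lambda2 * (\<Sum>j\<in>{0..<D}. v $ j * v $ j)
          = (\<Sum>j\<in>{0..<D}. v $ j * ((Xt *\<^sub>v u) $ j + lambda2 * v $ j))"
      by (simp add: sum_distrib_left sum.distrib algebra_simps)
    also have "\<dots> = 0" using comp by simp
    finally have "(\<Sum>i\<in>{0..<n}. u $ i * u $ i) + lambda2 * (\<Sum>j\<in>{0..<D}. v $ j * v $ j) = 0" using e1 by simp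
    moreover have "(\<Sum>i\<in>{0..<n}. u $ i * u $ i) \<ge> 0" by (intro sum_nonneg) simp
    moreover have "(\<Sum>j\<in>{0..<D}. v $ j * v $ j) \<ge> 0" by (intro sum_nonneg) simp
    ultimately have "lambda2 * (\<Sum>j\<in>{0..<D}. v $ j * v $ j) = 0" using lam
      by (smt (verit) mult_nonneg_nonneg)
    hence "(\<Sum>j\<in>{0..<D}. v $ j * v $ j) = 0" using lam by simp
    hence "\<forall>j\<in>{0..<D}. v $ j * v $ j = 0" by (subst (asm) sum_nonneg_eq_0_iff) auto
    thus ?thesis using v by (intro eq_vecI) auto
  qed
  have "det A \<noteq> 0" using det_0_iff_vec_prod_zero_field[OF Ac] inj by blast
  hence unit: "A \<in> Units (ring_mat TYPE(real) D ())" by (rule det_non_zero_imp_unit[OF Ac])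
  obtain M where M: "mat_inverse A = Some M"
  proof (cases "mat_inverse A")
    case None
    from mat_inverse(1)[OF Ac None, of "()"] unit show ?thesis by simp
  next
    case (Some M) thus ?thesis using that by simp
  qed
  have MA: "M * A = 1\<^sub>m D" and Mc: "M \<in> carrier_mat D D" using mat_inverse(2)[OF Ac M] by auto
  have "M *\<^sub>v (Xt *\<^sub>v y) = M *\<^sub>v (A *\<^sub>v w)" using Aw by simp
  also have "\<dots> = (M * A) *\<^sub>v w" using Mc Ac wc by simp
  also have "\<dots> = w" using MA wc by simp
  finally show ?thesis using M unfolding A_def Xt_def w_def Qm_def by auto
qed

end
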